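(* For any $A\in\mathrm{GL}(\mathcal S)$ with $A\notin\mathrm{Inv}(\mathcal S)$, the centralizer of $A$ in $\mathrm{Inv}(\mathcal S)$ is a proper subgroup of $\mathrm{Inv}(\mathcal S)$; i.e. there exists $\varepsilon\in\mathrm{Inv}(\mathcal S)$ with $A\circ\varepsilon\neq\varepsilon\circ A$.
   Context: Work over an algebraically closed field of characteristic $\neq2$. $F(X)=\sum_{i=0}^6f_iX^i$, $f_6\neq0$, distinct roots $\theta_1,\dots,\theta_6$. $P_j(X)=\prod_{i\ne j}(X-\theta_i)$, $\omega_j=P_j(\theta_j)$. Points of $\mathbb P^5$ are identified with $P(X)=\sum_{j=0}^5p_jX^j$; $\pi_j=P(\theta_j)/\omega_j$. $\mathcal S\subset\mathbb P^5$ is defined by $\sum_j\theta_j^i\omega_j\pi_j^2=0$, $i=0,1,2$. $\varepsilon^{(i)}$ is the involution $\pi_j\mapsto(-1)^{\delta_{ij}}\pi_j$; $\mathrm{Inv}(\mathcal S)$ is the group of order 32 generated by them. The 32 lines $\varepsilon(\Delta_0)$, $\varepsilon\in\mathrm{Inv}(\mathcal S)$, with $\Delta_0=\{(p_0:p_1:0:0:0:0)\}$, are all the lines on $\mathcal S$. $\mathrm{GL}(\mathcal S)$ is the group of automorphisms of $\mathcal S$ which are restrictions of projective linear transformations of $\mathbb P^5$. *)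

theory Defs
  imports "HOL-Computational_Algebra.Polynomial"
begin

text \<open>Roots are indexed by 0..5 (paper: 1..6). Points of P^5 are nonzero polynomials
  P of degree at most 5, up to nonzero scalars; S is represented by its affine cone.\<close>

definition Pj :: "(nat \<Rightarrow> 'k::field) \<Rightarrow> nat \<Rightarrow> 'k poly" where
  "Pj \<theta> j = (\<Prod>i\<in>{..<6} - {j}. [:- \<theta> i, 1:])"

definition omega :: "(nat \<Rightarrow> 'k::field) \<Rightarrow> nat \<Rightarrow> 'k" where
  "omega \<theta> j = poly (Pj \<theta> j) (\<theta> j)"

definition picoord :: "(nat \<Rightarrow> 'k::field) \<Rightarrow> 'k poly \<Rightarrow> nat \<Rightarrow> 'k" where
  "picoord \<theta> P j = poly P (\<theta> j) / omega \<theta> j"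

definition V5 :: "'k::field poly set" where
  "V5 = {P. degree P \<le> 5}"

definition Scone :: "(nat \<Rightarrow> 'k::field) \<Rightarrow> 'k poly set" where
  "Scone \<theta> = {P \<in> V5. P \<noteq> 0 \<and>
     (\<forall>i<3. (\<Sum>j<6. \<theta> j ^ i * omega \<theta> j * (picoord \<theta> P j)^2) = 0)}"

definition epsInv :: "(nat \<Rightarrow> 'k::field) \<Rightarrow> nat set \<Rightarrow> 'k poly \<Rightarrow> 'k poly" where
  "epsInv \<theta> T P = (\<Sum>j<6. smult ((if j \<in> T then -1 else 1) * picoord \<theta> P j) (Pj \<theta> j))"

text \<open>Inv(S): the group generated by the eps^(i), i.e. all sign changes.\<close>
definition Inv_S :: "(nat \<Rightarrow> 'k::field) \<Rightarrow> ('k poly \<Rightarrow> 'k poly) set" where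
  "Inv_S \<theta> = {epsInv \<theta> T | T. T \<subseteq> {..<6}}"

text \<open>Invertible linear maps of the 6-dimensional space (representing projective
  linear transformations of P^5).\<close>
definition lin_bij :: "('k::field poly \<Rightarrow> 'k poly) \<Rightarrow> bool" where
  "lin_bij L \<longleftrightarrow> (\<forall>P\<in>V5. \<forall>Q\<in>V5. L (P + Q) = L P + L Q)
     \<and> (\<forall>c. \<forall>P\<in>V5. L (smult c P) = smult c (L P)) \<and> bij_betw L V5 V5"

definition in_GL_S :: "(nat \<Rightarrow> 'k::field) \<Rightarrow> ('k poly \<Rightarrow> 'k poly) \<Rightarrow> bool" where
  "in_GL_S \<theta> L \<longleftrightarrow> lin_bij L \<and> L ` Scone \<theta> = Scone \<theta>"

definition same_on_S :: "(nat \<Rightarrow> 'k::field) \<Rightarrow> ('k poly \<Rightarrow> 'k poly) \<Rightarrow> ('k poly \<Rightarrow> 'k poly) \<Rightarrow> bool" where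
  "same_on_S \<theta> L M \<longleftrightarrow> (\<forall>P\<in>Scone \<theta>. \<exists>c. L P = smult c (M P))"

end

theory Submission
  imports Defs
begin

locale lag =
  fixes \<theta> :: "nat \<Rightarrow> 'k::field"
  assumes inj: "inj_on \<theta> {..<6}"
begin

lemma poly_Pj: "poly (Pj \<theta> j) x = (\<Prod>i\<in>{..<6}-{j}. x - \<theta> i)"
  by (simp add: Pj_def poly_prod)

lemma Pj_at: "i < 6 \<Longrightarrow> i \<noteq> j \<Longrightarrow> poly (Pj \<theta> j) (\<theta> i) = 0"
  unfolding poly_Pj by (rule prod_zero) auto

lemma omega_nz: "j < 6 \<Longrightarrow> omega \<theta> j \<noteq> 0"
  unfolding omega_def poly_Pj
  using inj by (auto simp: inj_on_def)

lemma degree_Pj: "j < 6 \<Longrightarrow> degree (Pj \<theta> j) = 5"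
proof -
  assume j: "j < 6"
  have "degree (Pj \<theta> j) = (\<Sum>i\<in>{..<6}-{j}. degree [:- \<theta> i, 1:])"
    unfolding Pj_def by (rule degree_prod_eq_sum_degree) auto
  also have "\<dots> = card ({..<6::nat}-{j})" by simp
  also have "\<dots> = 5" using j by simp
  finally show ?thesis .
qed

lemma coeff5_Pj: "j < 6 \<Longrightarrow> coeff (Pj \<theta> j) 5 = 1"
proof -
  assume j: "j < 6"
  have "lead_coeff (Pj \<theta> j) = 1" unfolding Pj_def lead_coeff_prod by simp
  thus ?thesis using degree_Pj[OF j] by simp
qed

lemma Pj_V5: "j < 6 \<Longrightarrow> Pj \<theta> j \<in> V5"
  using degree_Pj by (simp add: V5_def)

lemma pc_Pj: "i < 6 \<Longrightarrow> j < 6 \<Longrightarrow> picoord \<theta> (Pj \<theta> j) i = (if i = j then 1 else 0)"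
  using Pj_at omega_nz by (auto simp: picoord_def omega_def)

lemma sumB_V5: "(\<Sum>j<6. smult (a j) (Pj \<theta> j)) \<in> V5"
  unfolding V5_def using degree_Pj
  by (auto intro!: degree_sum_le order.trans[OF degree_smult_le])

lemma pc_sum: "k < 6 \<Longrightarrow> picoord \<theta> (\<Sum>j<6. smult (a j) (Pj \<theta> j)) k = a k"
proof -
  assume k: "k < 6"
  have "poly (\<Sum>j<6. smult (a j) (Pj \<theta> j)) (\<theta> k) = (\<Sum>j<6. if j = k then a k * omega \<theta> k else 0)"
    unfolding poly_sum by (rule sum.cong) (auto simp: Pj_at k omega_def)
  also have "\<dots> = a k * omega \<theta> k" using k by simp
  finally show ?thesis using omega_nz[OF k] by (simp add: picoord_def)
qed

lemma pc_add: "picoord \<theta> (P + Q) k = picoord \<theta> P k + picoord \<theta> Q k"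
  by (simp add: picoord_def add_divide_distrib)
lemma pc_smult: "picoord \<theta> (smult c P) k = c * picoord \<theta> P k"
  by (simp add: picoord_def)

lemma lagrange: assumes "P \<in> V5" shows "P = (\<Sum>j<6. smult (picoord \<theta> P j) (Pj \<theta> j))"
proof (rule ccontr)
  define D where "D = P - (\<Sum>j<6. smult (picoord \<theta> P j) (Pj \<theta> j))"
  assume "\<not> ?thesis"
  hence D0: "D \<noteq> 0" by (simp add: D_def)
  have degD: "degree D \<le> 5" unfolding D_def using assms sumB_V5[of "picoord \<theta> P"]
    by (auto simp: V5_def intro: order.trans[OF degree_diff_le])
  have "\<theta> ` {..<6} \<subseteq> {x. poly D x = 0}"
  proof
    fix x assume "x \<in> \<theta> ` {..<6}"
    then obtain k where k: "k < 6" "x = \<theta> k" by auto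
    have "picoord \<theta> (D + (\<Sum>j<6. smult (picoord \<theta> P j) (Pj \<theta> j))) k = picoord \<theta> P k"
      by (simp add: D_def)
    hence "picoord \<theta> D k + picoord \<theta> P k = picoord \<theta> P k"
      using pc_sum[OF k(1), of "picoord \<theta> P"] by (simp add: pc_add)
    thus "x \<in> {x. poly D x = 0}" using k omega_nz[OF k(1)] by (simp add: picoord_def)
  qed
  hence "card (\<theta> ` {..<6}) \<le> card {x. poly D x = 0}"
    by (intro card_mono poly_roots_finite D0)
  moreover have "card (\<theta> ` {..<6}) = 6" using card_image[OF inj] by simp
  ultimately show False using card_poly_roots_bound[OF D0] degD by simp
qed

lemma coeff_ident: assumes "degree r \<le> 5"
  shows "(\<Sum>j<6. poly r (\<theta> j) / omega \<theta> j) = coeff r 5"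
proof -
  have "coeff r 5 = coeff (\<Sum>j<6. smult (picoord \<theta> r j) (Pj \<theta> j)) 5"
    using lagrange[of r] assms by (simp add: V5_def)
  also have "\<dots> = (\<Sum>j<6. poly r (\<theta> j) / omega \<theta> j)"
    unfolding coeff_sum by (rule sum.cong) (auto simp: coeff5_Pj picoord_def)
  finally show ?thesis by simp
qed

lemma pc_ext: assumes "P \<in> V5" "Q \<in> V5" "\<And>j. j < 6 \<Longrightarrow> picoord \<theta> P j = picoord \<theta> Q j"
  shows "P = Q"
proof -
  have "(\<Sum>j<6. smult (picoord \<theta> P j) (Pj \<theta> j)) = (\<Sum>j<6. smult (picoord \<theta> Q j) (Pj \<theta> j))"
    using assms(3) by (intro sum.cong) auto
  thus ?thesis using lagrange[OF assms(1)] lagrange[OF assms(2)] by simp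
qed

lemma pc_eps: "k < 6 \<Longrightarrow> picoord \<theta> (epsInv \<theta> T P) k = (if k \<in> T then -1 else 1) * picoord \<theta> P k"
  unfolding epsInv_def by (rule pc_sum)

lemma eps_V5: "epsInv \<theta> T P \<in> V5"
  unfolding epsInv_def by (rule sumB_V5)

lemma zero_V5: "0 \<in> V5" by (simp add: V5_def)

lemma pc_zero_imp: assumes "P \<in> V5" "\<And>j. j < 6 \<Longrightarrow> picoord \<theta> P j = 0" shows "P = 0"
  using pc_ext[OF assms(1) zero_V5] assms(2) by (simp add: picoord_def)

lemma eps_Scone: assumes "P \<in> Scone \<theta>" shows "epsInv \<theta> T P \<in> Scone \<theta>"
proof -
  have PV: "P \<in> V5" "P \<noteq> 0" using assms by (auto simp: Scone_def)
  have sq: "\<And>j. j < 6 \<Longrightarrow> (picoord \<theta> (epsInv \<theta> T P) j)^2 = (picoord \<theta> P j)^2"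
    by (simp add: pc_eps power_mult_distrib)
  have "epsInv \<theta> T P \<noteq> 0"
  proof
    assume "epsInv \<theta> T P = 0"
    hence "\<And>j. j < 6 \<Longrightarrow> picoord \<theta> P j = 0"
    proof -
      fix j :: nat assume j: "j < 6"
      have "picoord \<theta> (epsInv \<theta> T P) j = 0" using \<open>epsInv \<theta> T P = 0\<close> by (simp add: picoord_def)
      thus "picoord \<theta> P j = 0" using pc_eps[OF j, of T P] by (simp split: if_splits)
    qed
    thus False using pc_zero_imp PV by blast
  qed
  moreover have "\<forall>i<3. (\<Sum>j<6. \<theta> j ^ i * omega \<theta> j * (picoord \<theta> (epsInv \<theta> T P) j)^2) = 0"
    using assms unfolding Scone_def by (auto simp: sq)
  ultimately show ?thesis using eps_V5 by (simp add: Scone_def)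
qed

lemma eps_id: assumes "P \<in> V5" "\<And>j. j \<in> T \<Longrightarrow> j < 6 \<Longrightarrow> picoord \<theta> P j = 0"
  shows "epsInv \<theta> T P = P"
  by (rule pc_ext[OF eps_V5 assms(1)]) (use assms(2) in \<open>auto simp: pc_eps\<close>)

lemma lin_Scone: assumes "degree P \<le> 1" "P \<noteq> 0" shows "P \<in> Scone \<theta>"
proof -
  have "\<forall>i<3. (\<Sum>j<6. \<theta> j ^ i * omega \<theta> j * (picoord \<theta> P j)^2) = 0"
  proof (intro allI impI)
    fix i :: nat assume i: "i < 3"
    define r where "r = monom 1 i * P^2"
    have dr: "degree r \<le> 4"
    proof -
      have "degree r \<le> i + degree (P^2)" unfolding r_def
        by (rule order.trans[OF degree_mult_le]) (simp add: degree_monom_eq)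
      also have "degree (P^2) \<le> 2 * degree P" using degree_power_le[of P 2] by (simp add: mult.commute)
      finally show ?thesis using i assms(1) by linarith
    qed
    have "(\<Sum>j<6. \<theta> j ^ i * omega \<theta> j * (picoord \<theta> P j)^2) = (\<Sum>j<6. poly r (\<theta> j) / omega \<theta> j)"
      by (rule sum.cong) (auto simp: r_def picoord_def poly_monom omega_nz power2_eq_square field_simps)
    also have "\<dots> = coeff r 5" using dr by (intro coeff_ident) simp
    also have "\<dots> = 0" using dr by (simp add: coeff_eq_0)
    finally show "(\<Sum>j<6. \<theta> j ^ i * omega \<theta> j * (picoord \<theta> P j)^2) = 0" .
  qed
  moreover have "P \<in> V5" using assms by (simp add: V5_def)
  ultimately show ?thesis using assms by (simp add: Scone_def)
qed

lemma B_notS: assumes "k < 6" shows "smult c (Pj \<theta> k) \<notin> Scone \<theta>"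
proof
  assume S: "smult c (Pj \<theta> k) \<in> Scone \<theta>"
  hence c: "c \<noteq> 0" by (auto simp: Scone_def)
  have "(\<Sum>j<6. \<theta> j ^ 0 * omega \<theta> j * (picoord \<theta> (smult c (Pj \<theta> k)) j)^2)
      = (\<Sum>j<6. if j = k then omega \<theta> k * c^2 else 0)"
    by (rule sum.cong) (auto simp: pc_smult pc_Pj assms)
  also have "\<dots> = omega \<theta> k * c^2" using assms by simp
  finally have "(\<Sum>j<6. \<theta> j ^ 0 * omega \<theta> j * (picoord \<theta> (smult c (Pj \<theta> k)) j)^2) \<noteq> 0"
    using c omega_nz[OF assms] by simp
  thus False using S unfolding Scone_def by force
qed

lemma sum_two: fixes j m :: nat assumes "j < 6" "m < 6" "j \<noteq> m" "\<And>l. l < 6 \<Longrightarrow> l \<noteq> j \<Longrightarrow> l \<noteq> m \<Longrightarrow> f l = 0"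
  shows "(\<Sum>l<6. f l) = f j + (f m :: 'k)"
proof -
  have "(\<Sum>l<6. f l) = (\<Sum>l\<in>{j,m}. f l)"
    using assms by (intro sum.mono_neutral_right) auto
  thus ?thesis using assms(3) by simp
qed

lemma poly_le4: "degree (r::'k poly) \<le> 4 \<Longrightarrow> poly r x = (\<Sum>n\<le>4. coeff r n * x ^ n)"
proof -
  assume d: "degree r \<le> 4"
  have "(\<Sum>i\<le>degree r. coeff r i * x ^ i) = (\<Sum>n\<le>4. coeff r n * x ^ n)"
    by (rule sum.mono_neutral_left) (use d in \<open>auto simp: coeff_eq_0\<close>)
  thus ?thesis by (simp add: poly_altdef)
qed

lemma moments: assumes "\<And>n. n \<le> 4 \<Longrightarrow> (\<Sum>j<6. y j * \<theta> j ^ n / omega \<theta> j) = 0" "degree r \<le> 4"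
  shows "(\<Sum>j<6. y j * poly r (\<theta> j) / omega \<theta> j) = 0"
proof -
  have "(\<Sum>j<6. y j * poly r (\<theta> j) / omega \<theta> j) = (\<Sum>j<6. \<Sum>n\<le>4. coeff r n * (y j * \<theta> j ^ n / omega \<theta> j))"
    by (rule sum.cong) (auto simp: poly_le4[OF assms(2)] sum_distrib_left sum_divide_distrib algebra_simps)
  also have "\<dots> = (\<Sum>n\<le>4. coeff r n * (\<Sum>j<6. y j * \<theta> j ^ n / omega \<theta> j))"
    by (subst sum.swap) (simp add: sum_distrib_left)
  also have "\<dots> = 0" using assms(1) by simp
  finally show ?thesis .
qed

lemma moments1: "n \<le> 4 \<Longrightarrow> (\<Sum>j<6. 1 * \<theta> j ^ n / omega \<theta> j) = 0"
  using coeff_ident[of "monom 1 n"] by (simp add: poly_monom degree_monom_eq coeff_monom)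

lemma V5_add: "P \<in> V5 \<Longrightarrow> Q \<in> V5 \<Longrightarrow> P + Q \<in> V5"
  unfolding V5_def by (auto intro: order.trans[OF degree_add_le])
lemma V5_smult: "P \<in> V5 \<Longrightarrow> smult c P \<in> V5"
  unfolding V5_def by (auto intro: order.trans[OF degree_smult_le])
lemma V5_sum: "finite A \<Longrightarrow> (\<And>j. j \<in> A \<Longrightarrow> f j \<in> V5) \<Longrightarrow> (\<Sum>j\<in>A. f j) \<in> V5"
  unfolding V5_def by (auto intro: degree_sum_le)

lemma aux1: "(x::'k) = c * (-1 * x) \<Longrightarrow> x \<noteq> 0 \<Longrightarrow> c = -1"
  by (metis add.inverse_inverse minus_mult_commute mult_cancel_right2 mult_minus1)

lemma smult_sumR: "smult c (\<Sum>i\<in>A. f i) = (\<Sum>i\<in>A. smult c (f i))"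
  by (induction A rule: infinite_finite_induct) (auto simp: smult_add_right)

lemma main:
  fixes L :: "'k poly \<Rightarrow> 'k poly"
  assumes char: "(2::'k) \<noteq> 0"
    and lin: "lin_bij L"
    and LS: "L ` Scone \<theta> = Scone \<theta>"
    and comm: "\<forall>E\<in>Inv_S \<theta>. same_on_S \<theta> (L \<circ> E) (E \<circ> L)"
  shows "\<exists>E\<in>Inv_S \<theta>. same_on_S \<theta> L E"
proof -
  have add: "\<And>P Q. P \<in> V5 \<Longrightarrow> Q \<in> V5 \<Longrightarrow> L (P + Q) = L P + L Q"
    and sm: "\<And>c P. P \<in> V5 \<Longrightarrow> L (smult c P) = smult c (L P)"
    and bij: "bij_betw L V5 V5" using lin by (auto simp: lin_bij_def)
  have LV: "\<And>P. P \<in> V5 \<Longrightarrow> L P \<in> V5" using bij by (auto simp: bij_betw_def)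
  have ScV: "\<And>P. P \<in> Scone \<theta> \<Longrightarrow> P \<in> V5" by (auto simp: Scone_def)
  have LSc: "\<And>P. P \<in> Scone \<theta> \<Longrightarrow> L P \<in> Scone \<theta>" using LS by blast
  have epsIn: "\<And>T. T \<subseteq> {..<6} \<Longrightarrow> epsInv \<theta> T \<in> Inv_S \<theta>" by (auto simp: Inv_S_def)
  have stepA: "picoord \<theta> (L P) k = 0" if P: "P \<in> Scone \<theta>" and k: "k < 6" and Pk: "picoord \<theta> P k = 0" for P k
  proof (rule ccontr)
    assume nz: "picoord \<theta> (L P) k \<noteq> 0"
    define Q where "Q = L P"
    have QS: "Q \<in> Scone \<theta>" using LSc[OF P] by (simp add: Q_def)
    have EP: "epsInv \<theta> {k} P = P" by (rule eps_id[OF ScV[OF P]]) (use Pk in simp)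
    obtain c where c: "L (epsInv \<theta> {k} P) = smult c (epsInv \<theta> {k} (L P))"
    proof -
      have "epsInv \<theta> {k} \<in> Inv_S \<theta>" using epsIn k by simp
      hence "same_on_S \<theta> (L \<circ> epsInv \<theta> {k}) (epsInv \<theta> {k} \<circ> L)" using comm by blast
      thus ?thesis using P that unfolding same_on_S_def comp_def by blast
    qed
    have Qc: "Q = smult c (epsInv \<theta> {k} Q)" using c unfolding EP Q_def .
    have pcQ: "\<And>j. j < 6 \<Longrightarrow> picoord \<theta> Q j = c * ((if j = k then -1 else 1) * picoord \<theta> Q j)"
    proof -
      fix j :: nat assume j: "j < 6"
      have "picoord \<theta> Q j = picoord \<theta> (smult c (epsInv \<theta> {k} Q)) j" using Qc by (rule arg_cong)
      thus "picoord \<theta> Q j = c * ((if j = k then -1 else 1) * picoord \<theta> Q j)"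
        unfolding pc_smult pc_eps[OF j] by simp
    qed
    have cm: "c = -1" using aux1[OF _ nz[folded Q_def]] pcQ[OF k] by simp
    have z: "picoord \<theta> Q j = 0" if "j < 6" "j \<noteq> k" for j
      using char pcQ[OF that(1)] that(2) cm by simp
    define cc where "cc = picoord \<theta> Q k"
    have "Q = smult cc (Pj \<theta> k)"
    proof (rule pc_ext)
      show "Q \<in> V5" by (rule ScV[OF QS])
      show "smult cc (Pj \<theta> k) \<in> V5" by (intro V5_smult Pj_V5[OF k])
      fix i :: nat assume i: "i < 6"
      show "picoord \<theta> Q i = picoord \<theta> (smult cc (Pj \<theta> k)) i"
        unfolding pc_smult pc_Pj[OF i k] cc_def using z[OF i] by auto
    qed
    thus False using QS B_notS[OF k, of cc] by simp
  qed
  have stepB: "picoord \<theta> (L (Pj \<theta> j)) k = 0" if j: "j < 6" and k: "k < 6" and jk: "j \<noteq> k" for j k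
  proof -
    define Q where "Q = [:- \<theta> k, 1:]"
    have QS: "Q \<in> Scone \<theta>" unfolding Q_def by (rule lin_Scone) auto
    have Qk: "picoord \<theta> Q k = 0" by (simp add: Q_def picoord_def)
    have Qj: "picoord \<theta> Q j \<noteq> 0" using j k jk inj omega_nz[OF j]
      by (auto simp: Q_def picoord_def inj_on_def)
    define Q' where "Q' = epsInv \<theta> {j} Q"
    have Q'S: "Q' \<in> Scone \<theta>" unfolding Q'_def by (rule eps_Scone[OF QS])
    have Q'k: "picoord \<theta> Q' k = 0" using jk k Qk by (simp add: Q'_def pc_eps)
    have dec: "Q = Q' + smult (2 * picoord \<theta> Q j) (Pj \<theta> j)"
    proof (rule pc_ext)
      show "Q \<in> V5" by (rule ScV[OF QS])
      show "Q' + smult (2 * picoord \<theta> Q j) (Pj \<theta> j) \<in> V5"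
        by (intro V5_add V5_smult ScV[OF Q'S] Pj_V5[OF j])
      fix i :: nat assume i: "i < 6"
      show "picoord \<theta> Q i = picoord \<theta> (Q' + smult (2 * picoord \<theta> Q j) (Pj \<theta> j)) i"
        unfolding pc_add pc_smult pc_Pj[OF i j] Q'_def pc_eps[OF i] by (cases "i = j") (simp_all add: algebra_simps)
    qed
    have "L Q = L Q' + smult (2 * picoord \<theta> Q j) (L (Pj \<theta> j))"
    proof -
      have "L Q = L (Q' + smult (2 * picoord \<theta> Q j) (Pj \<theta> j))" using dec by (rule arg_cong)
      thus ?thesis by (simp add: add[OF ScV[OF Q'S] V5_smult[OF Pj_V5[OF j]]] sm[OF Pj_V5[OF j]])
    qed
    hence "picoord \<theta> (L Q) k = picoord \<theta> (L Q') k + 2 * picoord \<theta> Q j * picoord \<theta> (L (Pj \<theta> j)) k"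
      by (simp add: pc_add pc_smult)
    hence "2 * picoord \<theta> Q j * picoord \<theta> (L (Pj \<theta> j)) k = 0"
      using stepA[OF QS k Qk] stepA[OF Q'S k Q'k] by simp
    thus ?thesis using char Qj by simp
  qed
  define d where "d j = picoord \<theta> (L (Pj \<theta> j)) j" for j
  have LB: "L (Pj \<theta> j) = smult (d j) (Pj \<theta> j)" if j: "j < 6" for j
  proof (rule pc_ext)
    show "L (Pj \<theta> j) \<in> V5" by (rule LV[OF Pj_V5[OF j]])
    show "smult (d j) (Pj \<theta> j) \<in> V5" by (rule V5_smult[OF Pj_V5[OF j]])
    fix i :: nat assume i: "i < 6"
    show "picoord \<theta> (L (Pj \<theta> j)) i = picoord \<theta> (smult (d j) (Pj \<theta> j)) i"
      using stepB[OF j i] unfolding pc_smult pc_Pj[OF i j] d_def by auto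
  qed
  have L0: "L 0 = 0" using sm[OF zero_V5, of 0] by simp
  have Lsum: "A \<subseteq> {..<6} \<Longrightarrow> L (\<Sum>j\<in>A. smult (a j) (Pj \<theta> j)) = (\<Sum>j\<in>A. smult (a j * d j) (Pj \<theta> j))" for A a
  proof (induction A rule: infinite_finite_induct)
    case (infinite A) thus ?case using L0 by simp
  next
    case empty thus ?case using L0 by simp
  next
    case (insert x F)
    have xV: "smult (a x) (Pj \<theta> x) \<in> V5" using insert by (intro V5_smult Pj_V5) auto
    have FV: "(\<Sum>j\<in>F. smult (a j) (Pj \<theta> j)) \<in> V5"
      using insert by (intro V5_sum V5_smult Pj_V5) auto
    show ?case using insert by (simp add: add[OF xV FV] sm LB Pj_V5)
  qed
  have LP: "L P = (\<Sum>j<6. smult (picoord \<theta> P j * d j) (Pj \<theta> j))" if "P \<in> V5" for P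
  proof -
    have "L P = L (\<Sum>j<6. smult (picoord \<theta> P j) (Pj \<theta> j))" using lagrange[OF that] by (rule arg_cong)
    thus ?thesis using Lsum[of "{..<6}" "picoord \<theta> P"] by simp
  qed
  have pcL: "picoord \<theta> (L P) j = picoord \<theta> P j * d j" if "P \<in> V5" "j < 6" for P j
    unfolding LP[OF that(1)] by (rule pc_sum[OF that(2)])
  define y where "y j = d j ^ 2" for j
  define Sy where "Sy n = (\<Sum>j<6. y j * \<theta> j ^ n / omega \<theta> j)" for n
  have quad: "Sy (i+2) - 2 * t * Sy (i+1) + t^2 * Sy i = 0" if i: "i < 3" for i t
  proof -
    define Q where "Q = [:- t, 1:]"
    have QS: "Q \<in> Scone \<theta>" unfolding Q_def by (rule lin_Scone) auto
    have LQ: "L Q \<in> Scone \<theta>" by (rule LSc[OF QS])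
    hence "(\<Sum>j<6. \<theta> j ^ i * omega \<theta> j * (picoord \<theta> (L Q) j)^2) = 0"
      using i unfolding Scone_def by blast
    moreover have "(\<Sum>j<6. \<theta> j ^ i * omega \<theta> j * (picoord \<theta> (L Q) j)^2)
       = (\<Sum>j<6. y j * \<theta> j ^ (i+2) / omega \<theta> j - 2 * t * (y j * \<theta> j ^ (i+1) / omega \<theta> j)
             + t^2 * (y j * \<theta> j ^ i / omega \<theta> j))"
    proof (rule sum.cong)
      fix j assume "j \<in> {..<6::nat}"
      hence j: "j < 6" by simp
      have w: "omega \<theta> j \<noteq> 0" by (rule omega_nz[OF j])
      show "\<theta> j ^ i * omega \<theta> j * (picoord \<theta> (L Q) j)^2 = y j * \<theta> j ^ (i+2) / omega \<theta> j - 2 * t * (y j * \<theta> j ^ (i+1) / omega \<theta> j)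
             + t^2 * (y j * \<theta> j ^ i / omega \<theta> j)"
        unfolding pcL[OF ScV[OF QS] j] y_def
        using w by (simp add: Q_def picoord_def power2_eq_square field_simps)
    qed simp
    ultimately show ?thesis
      by (simp add: Sy_def sum.distrib sum_subtractf sum_distrib_left)
  qed
  have Sy0: "Sy n = 0" if "n \<le> 4" for n
  proof -
    have h2: "Sy (i+2) = 0" if "i < 3" for i using quad[OF that, of 0] by simp
    have a: "Sy 2 - 2 * Sy 1 + Sy 0 = 0" using quad[of 0 1] by (simp add: numeral_2_eq_2)
    have b: "Sy 2 + 2 * Sy 1 + Sy 0 = 0" using quad[of 0 "-1"] by (simp add: numeral_2_eq_2)
    have four: "(4::'k) \<noteq> 0"
    proof -
      have "(4::'k) = 2 * 2" by simp
      thus ?thesis using char by (metis mult_eq_0_iff)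
    qed
    have s1: "Sy 1 = 0" using four a b h2[of 0] char by (simp add: algebra_simps numeral_2_eq_2)
    have s0: "Sy 0 = 0" using a h2[of 0] s1 by (simp add: numeral_2_eq_2)
    have "n = 0 \<or> n = 1 \<or> n = 0 + 2 \<or> n = 1 + 2 \<or> n = 2 + 2" using that by auto
    thus ?thesis using s0 s1 h2[of 0] h2[of 1] h2[of 2] by auto
  qed
  have yeq: "y j = y m" if j: "j < 6" and m: "m < 6" and jm: "j \<noteq> m" for j m
  proof -
    define r where "r = (\<Prod>i\<in>{..<6}-{j,m}. [:- \<theta> i, 1:])"
    have pr: "poly r x = (\<Prod>i\<in>{..<6}-{j,m}. x - \<theta> i)" for x
      by (simp add: r_def poly_prod)
    have dr: "degree r \<le> 4"
    proof -
      have "degree r \<le> sum (degree \<circ> (\<lambda>i. [:- \<theta> i, 1:])) ({..<6}-{j,m})"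
        unfolding r_def by (rule degree_prod_sum_le) simp
      also have "\<dots> = card ({..<6::nat}-{j,m})" by simp
      also have "\<dots> = 4" using j m jm by (simp add: card_Diff_subset)
      finally show ?thesis by simp
    qed
    have rz: "poly r (\<theta> l) = 0" if "l < 6" "l \<noteq> j" "l \<noteq> m" for l
      unfolding pr by (rule prod_zero) (use that in auto)
    have rj: "poly r (\<theta> j) \<noteq> 0"
      unfolding pr using inj j m by (auto simp: inj_on_def)
    define a where "a l = poly r (\<theta> l) / omega \<theta> l" for l
    have aj: "a j \<noteq> 0" using rj omega_nz[OF j] by (simp add: a_def)
    have e1: "(\<Sum>l<6. y l * poly r (\<theta> l) / omega \<theta> l) = 0"
      by (rule moments[OF _ dr]) (use Sy0 in \<open>simp add: Sy_def\<close>)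
    have e2: "(\<Sum>l<6. 1 * poly r (\<theta> l) / omega \<theta> l) = 0"
      by (rule moments[OF _ dr]) (rule moments1)
    have "(\<Sum>l<6. y l * poly r (\<theta> l) / omega \<theta> l) = y j * a j + y m * a m"
      using sum_two[OF j m jm, of "\<lambda>l. y l * poly r (\<theta> l) / omega \<theta> l"] rz by (simp add: a_def)
    hence f1: "y j * a j + y m * a m = 0" using e1 by simp
    have "(\<Sum>l<6. 1 * poly r (\<theta> l) / omega \<theta> l) = a j + a m"
      using sum_two[OF j m jm, of "\<lambda>l. 1 * poly r (\<theta> l) / omega \<theta> l"] rz by (simp add: a_def)
    hence f2: "a m = - a j" using e2 by (simp add: eq_neg_iff_add_eq_0 add.commute)
    have "(y j - y m) * a j = 0" using f1 f2 by (simp add: algebra_simps)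
    thus ?thesis using aj by simp
  qed
  have B0: "Pj \<theta> 0 \<noteq> 0" using omega_nz[of 0] by (auto simp: omega_def)
  have d0: "d 0 \<noteq> 0"
  proof
    assume "d 0 = 0"
    hence "L (Pj \<theta> 0) = L 0" using LB[of 0] L0 by simp
    hence "Pj \<theta> 0 = 0" using bij Pj_V5[of 0] zero_V5 unfolding bij_betw_def inj_on_def by auto
    thus False using B0 by simp
  qed
  define T where "T = {j. j < 6 \<and> d j \<noteq> d 0}"
  have dj: "d j = (if j \<in> T then -1 else 1) * d 0" if j: "j < 6" for j
  proof -
    have "d j ^ 2 = d 0 ^ 2"
    proof (cases "j = 0")
      case False thus ?thesis using yeq[OF j _ False] by (simp add: y_def)
    qed simp
    hence "(d j - d 0) * (d j + d 0) = 0" by (simp add: algebra_simps power2_eq_square)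
    hence "d j = d 0 \<or> d j = - d 0" by (auto simp: eq_neg_iff_add_eq_0)
    thus ?thesis using j by (auto simp: T_def)
  qed
  have "same_on_S \<theta> L (epsInv \<theta> T)"
    unfolding same_on_S_def
  proof
    fix P assume P: "P \<in> Scone \<theta>"
    have "L P = smult (d 0) (epsInv \<theta> T P)"
      unfolding LP[OF ScV[OF P]] epsInv_def smult_sumR
    proof (rule sum.cong)
      fix j assume "j \<in> {..<6::nat}"
      hence dd: "d j = (if j \<in> T then -1 else 1) * d 0" by (intro dj) simp
      show "smult (picoord \<theta> P j * d j) (Pj \<theta> j) = smult (d 0) (smult ((if j \<in> T then -1 else 1) * picoord \<theta> P j) (Pj \<theta> j))"
        unfolding smult_smult dd by (simp add: ac_simps)
    qed simp
    thus "\<exists>c. L P = smult c (epsInv \<theta> T P)" by blast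
  qed
  moreover have "epsInv \<theta> T \<in> Inv_S \<theta>" using epsIn by (simp add: T_def subset_iff)
  ultimately show ?thesis by blast
qed

end

theorem mainTheorem11:
  fixes F :: "'k::field poly" and \<theta> :: "nat \<Rightarrow> 'k" and L :: "'k poly \<Rightarrow> 'k poly"
  assumes alg_closed: "\<forall>p::'k poly. degree p > 0 \<longrightarrow> (\<exists>x. poly p x = 0)"
    and char: "(2::'k) \<noteq> 0"
    and degF: "degree F = 6"
    and distinct: "inj_on \<theta> {..<6}"
    and roots: "\<forall>j<6. poly F (\<theta> j) = 0"
    and A: "in_GL_S \<theta> L"
    and notInv: "\<forall>E\<in>Inv_S \<theta>. \<not> same_on_S \<theta> L E"
  shows "\<exists>E\<in>Inv_S \<theta>. \<not> same_on_S \<theta> (L \<circ> E) (E \<circ> L)"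
proof (rule ccontr)
  interpret lag \<theta> by unfold_locales (rule distinct)
  assume "\<not> ?thesis"
  hence "\<forall>E\<in>Inv_S \<theta>. same_on_S \<theta> (L \<circ> E) (E \<circ> L)" by blast
  hence "\<exists>E\<in>Inv_S \<theta>. same_on_S \<theta> L E"
    using main[OF char] A unfolding in_GL_S_def by blast
  thus False using notInv by blast
qed

end
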